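(* Let $p\ge k\ge 1$ be integers and let $\mathbf y\in\mathbb{R}^p$. Let $\mathcal{I}^k\subseteq\{1,\dots,p\}$ be a top-$k$ index set of $\mathbf y$ (a set of $k$ indices of entries of largest magnitude), and let $\operatorname{top}_k(\mathbf y)$ be the vector that agrees with $\mathbf y$ on $\mathcal{I}^k$ and is $0$ elsewhere. Let $\gamma_0\ge 0$ be such that $\|\mathbf y-\operatorname{top}_k(\mathbf y)\|^2\le\gamma_0\|\mathbf y\|^2$. Let $0\le d\le k$ be an integer, and let $\tilde{\mathcal I}^k$ be a $k$-element index set with $\mathbf H(\mathcal I^k,\tilde{\mathcal I}^k)=2d$, chosen at random so that its $k-d$ common indices with $\mathcal{I}^k$ form a uniformly random $(k-d)$-subset of $\mathcal I^k$. Define $\mathrm{comp}(\mathbf y)\in\mathbb{R}^p$ by $\mathrm{comp}(\mathbf y)_m=\mathbf y_m$ if $m\in\tilde{\mathcal I}^k$ and $0$ otherwise. Then $$\mathbb{E}\|\mathbf y-\mathrm{comp}(\mathbf y)\|^2\le\gamma\|\mathbf y\|^2,\qquad \gamma:=\frac{d}{k}+\Big(1-\frac{d}{k}\Big)\gamma_0 .$$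
   Context: For a set $\mathcal I$ of $k$ indices in $\{1,\dots,p\}$, let $\mathbf x_{\mathcal I}\in\{0,1\}^p$ be its indicator vector. For two such sets, $\mathbf H(\mathcal I_1,\mathcal I_2)$ denotes the Hamming distance between $\mathbf x_{\mathcal I_1}$ and $\mathbf x_{\mathcal I_2}$; for two $k$-element sets it equals $2d$ where $d=k-|\mathcal I_1\cap\mathcal I_2|$. $\|\cdot\|$ is the Euclidean norm. *)

theory Defs
  imports "HOL-Probability.Probability"
begin

text \<open>Vectors in R^p are represented as functions nat => real, indices 1..p.\<close>

definition sqnorm :: "nat \<Rightarrow> (nat \<Rightarrow> real) \<Rightarrow> real" where
  "sqnorm p y = (\<Sum>m\<in>{1..p}. (y m)^2)"

definition is_top_k_set :: "nat \<Rightarrow> nat \<Rightarrow> (nat \<Rightarrow> real) \<Rightarrow> nat set \<Rightarrow> bool" where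
  "is_top_k_set p k y I \<longleftrightarrow> I \<subseteq> {1..p} \<and> card I = k \<and>
     (\<forall>i\<in>I. \<forall>j\<in>{1..p} - I. \<bar>y j\<bar> \<le> \<bar>y i\<bar>)"

text \<open>Restriction of y to an index set (zero elsewhere): top_k(y) = restr I y, comp(y) = restr I~ y.\<close>
definition restr :: "nat set \<Rightarrow> (nat \<Rightarrow> real) \<Rightarrow> nat \<Rightarrow> real" where
  "restr J y m = (if m \<in> J then y m else 0)"

definition hamming :: "nat \<Rightarrow> nat set \<Rightarrow> nat set \<Rightarrow> nat" where
  "hamming p I J = card {m\<in>{1..p}. (m \<in> I) \<noteq> (m \<in> J)}"

end

theory Submission
  imports Defs
begin

lemma card_sub_mem:
  assumes "finite I" "m \<in> I" "r \<ge> 1"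
  shows "card {S. S \<subseteq> I \<and> card S = r \<and> m \<in> S} = (card I - 1) choose (r - 1)"
proof -
  have eq: "{S. S \<subseteq> I \<and> card S = r \<and> m \<in> S} = insert m ` {T. T \<subseteq> I - {m} \<and> card T = r - 1}"
  proof
    show "{S. S \<subseteq> I \<and> card S = r \<and> m \<in> S} \<subseteq> insert m ` {T. T \<subseteq> I - {m} \<and> card T = r - 1}"
    proof
      fix S assume S: "S \<in> {S. S \<subseteq> I \<and> card S = r \<and> m \<in> S}"
      then have fS: "finite S" using assms(1) finite_subset by blast
      have "S = insert m (S - {m})" using S by auto
      moreover have "card (S - {m}) = r - 1" using S fS by auto
      ultimately show "S \<in> insert m ` {T. T \<subseteq> I - {m} \<and> card T = r - 1}" using S by blast
    qed
  next
    show "insert m ` {T. T \<subseteq> I - {m} \<and> card T = r - 1} \<subseteq> {S. S \<subseteq> I \<and> card S = r \<and> m \<in> S}"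
    proof
      fix S assume "S \<in> insert m ` {T. T \<subseteq> I - {m} \<and> card T = r - 1}"
      then obtain T where T: "T \<subseteq> I - {m}" "card T = r - 1" "S = insert m T" by blast
      have "finite T" using T(1) assms(1) finite_subset by blast
      then have "card S = r" using T assms(3) by (auto simp: card_insert_if)
      then show "S \<in> {S. S \<subseteq> I \<and> card S = r \<and> m \<in> S}" using T assms(2) by auto
    qed
  qed
  have inj: "inj_on (insert m) {T. T \<subseteq> I - {m} \<and> card T = r - 1}"
    proof (rule inj_onI)
    fix A B assume "A \<in> {T. T \<subseteq> I - {m} \<and> card T = r - 1}" "B \<in> {T. T \<subseteq> I - {m} \<and> card T = r - 1}"
      "insert m A = insert m B"
    then have "m \<notin> A" "m \<notin> B" "insert m A = insert m B" by auto
    then show "A = B" by (metis Diff_insert_absorb)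
  qed
  have "card {S. S \<subseteq> I \<and> card S = r \<and> m \<in> S} = card {T. T \<subseteq> I - {m} \<and> card T = r - 1}"
    unfolding eq by (rule card_image[OF inj])
  also have "\<dots> = card (I - {m}) choose (r - 1)" using n_subsets[of "I - {m}" "r - 1"] assms(1) by simp
  finally show ?thesis using assms by simp
qed

lemma avg_sub:
  fixes f :: "nat \<Rightarrow> real"
  assumes "finite I" "card I = k" "k \<ge> 1" "r \<le> k"
  shows "(\<Sum>S\<in>{S. S \<subseteq> I \<and> card S = r}. sum f S) / real (card {S. S \<subseteq> I \<and> card S = r})
          = real r / real k * sum f I"
proof (cases "r = 0")
  case True
  have "{S. S \<subseteq> I \<and> card S = r} = {{}}" using True assms(1)
    by (auto dest: finite_subset[OF _ assms(1)])
  then show ?thesis using True by simp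
next
  case False
  let ?F = "{S. S \<subseteq> I \<and> card S = r}"
  have fF: "finite ?F" using assms(1) by auto
  have "(\<Sum>S\<in>?F. sum f S) = (\<Sum>S\<in>?F. \<Sum>m\<in>I. if m \<in> S then f m else 0)"
    by (rule sum.cong) (auto simp: sum.If_cases assms(1) Int_absorb1)
  also have "\<dots> = (\<Sum>m\<in>I. \<Sum>S\<in>?F. if m \<in> S then f m else 0)" by (rule sum.swap)
  also have "\<dots> = (\<Sum>m\<in>I. f m * real (card {S. S \<subseteq> I \<and> card S = r \<and> m \<in> S}))"
  proof (rule sum.cong)
    fix m assume "m \<in> I"
    have "(\<Sum>S\<in>?F. if m \<in> S then f m else 0) = (\<Sum>S\<in>{S\<in>?F. m \<in> S}. f m)"
      using fF by (simp add: sum.If_cases Int_def)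
    also have "\<dots> = f m * real (card {S. S \<subseteq> I \<and> card S = r \<and> m \<in> S})"
      by (simp add: conj_assoc mult.commute)
    finally show "(\<Sum>S\<in>?F. if m \<in> S then f m else 0) = f m * real (card {S. S \<subseteq> I \<and> card S = r \<and> m \<in> S})" .
  qed simp
  also have "\<dots> = (\<Sum>m\<in>I. f m * real ((k - 1) choose (r - 1)))"
    using card_sub_mem[OF assms(1)] False assms(2) by (intro sum.cong) auto
  also have "\<dots> = real ((k - 1) choose (r - 1)) * sum f I" by (simp add: sum_distrib_right mult.commute)
  finally have num: "(\<Sum>S\<in>?F. sum f S) = real ((k - 1) choose (r - 1)) * sum f I" .
  have den: "card ?F = k choose r" using n_subsets[OF assms(1), of r] assms(2) by simp
  have key: "real k * real ((k - 1) choose (r - 1)) = real (k choose r) * real r"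
  proof -
    obtain k' where k': "k = Suc k'" using assms(3) by (cases k) auto
    obtain r' where r': "r = Suc r'" using False by (cases r) auto
    from k' r' have "k * ((k - 1) choose (r - 1)) = (k choose r) * r" using Suc_times_binomial_eq[of k' r'] by simp
    then show ?thesis by (metis of_nat_mult)
  qed
  have pos: "real (k choose r) > 0" using assms(4) by simp
  have kpos: "real k > 0" using assms(3) by simp
  have rat: "real ((k - 1) choose (r - 1)) / real (k choose r) = real r / real k"
    using key pos kpos by (simp add: field_simps)
  have "real ((k - 1) choose (r - 1)) * sum f I / real (k choose r)
      = (real ((k - 1) choose (r - 1)) / real (k choose r)) * sum f I" by (rule times_divide_eq_left[symmetric])
  also have "\<dots> = real r / real k * sum f I" by (simp only: rat)
  finally show ?thesis unfolding num den .
qed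

lemma sqnorm_restr:
  assumes "J \<subseteq> {1..p}"
  shows "sqnorm p (\<lambda>m. y m - restr J y m) = sqnorm p y - (\<Sum>m\<in>J. (y m)^2)"
proof -
  have "sqnorm p (\<lambda>m. y m - restr J y m) = (\<Sum>m\<in>{1..p}. (y m)^2 - (if m \<in> J then (y m)^2 else 0))"
    unfolding sqnorm_def restr_def by (rule sum.cong) auto
  also have "\<dots> = sqnorm p y - (\<Sum>m\<in>{1..p}. if m \<in> J then (y m)^2 else 0)"
    unfolding sqnorm_def by (simp add: sum_subtractf)
  also have "(\<Sum>m\<in>{1..p}. if m \<in> J then (y m)^2 else 0) = (\<Sum>m\<in>J. (y m)^2)"
  proof -
    have "J \<inter> {1..p} = J" using assms by auto
    moreover have "(\<Sum>m\<in>{1..p}. if m \<in> J then (y m)^2 else 0) = (\<Sum>m\<in>{1..p} \<inter> J. (y m)^2)"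
      by (simp add: sum.If_cases)
    ultimately show ?thesis by (simp add: Int_commute)
  qed
  finally show ?thesis .
qed

theorem lemma1:
  fixes p k d :: nat and y :: "nat \<Rightarrow> real" and I :: "nat set" and \<gamma>0 :: real
    and M :: "nat set pmf"
  assumes "1 \<le> k" and "k \<le> p"
    and "is_top_k_set p k y I"
    and "\<gamma>0 \<ge> 0"
    and "sqnorm p (\<lambda>m. y m - restr I y m) \<le> \<gamma>0 * sqnorm p y"
    and "d \<le> k"
    and "\<forall>J\<in>set_pmf M. J \<subseteq> {1..p} \<and> card J = k \<and> hamming p I J = 2 * d"
    and "map_pmf (\<lambda>J. J \<inter> I) M = pmf_of_set {S. S \<subseteq> I \<and> card S = k - d}"
  shows "measure_pmf.expectation M (\<lambda>J. sqnorm p (\<lambda>m. y m - restr J y m))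
           \<le> (real d / real k + (1 - real d / real k) * \<gamma>0) * sqnorm p y"
proof -
  define N where "N = sqnorm p y"
  define g where "g S = (\<Sum>m\<in>S. (y m)^2)" for S
  define F where "F = {S. S \<subseteq> I \<and> card S = k - d}"
  have Isub: "I \<subseteq> {1..p}" and cI: "card I = k" using assms(3) unfolding is_top_k_set_def by auto
  have fI: "finite I" using Isub finite_subset by blast
  have fin: "finite (set_pmf M)"
    by (rule finite_subset[of _ "Pow {1..p}"]) (use assms(7) in auto)
  have intM: "integrable (measure_pmf M) f" for f :: "nat set \<Rightarrow> real"
    by (rule integrable_measure_pmf_finite[OF fin])
  have "measure_pmf.expectation M (\<lambda>J. sqnorm p (\<lambda>m. y m - restr J y m))
        \<le> measure_pmf.expectation M (\<lambda>J. N - g (J \<inter> I))"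
  proof (rule integral_mono_AE[OF intM intM])
    show "AE J in measure_pmf M. sqnorm p (\<lambda>m. y m - restr J y m) \<le> N - g (J \<inter> I)"
    proof (rule AE_pmfI)
      fix J assume J: "J \<in> set_pmf M"
      then have Js: "J \<subseteq> {1..p}" using assms(7) by auto
      have fJ: "finite J" using Js finite_subset by blast
      have "g (J \<inter> I) \<le> g J" unfolding g_def by (rule sum_mono2[OF fJ]) auto
      then show "sqnorm p (\<lambda>m. y m - restr J y m) \<le> N - g (J \<inter> I)"
        using sqnorm_restr[OF Js, of y] unfolding N_def g_def by simp
    qed
  qed
  also have "\<dots> = N - measure_pmf.expectation M (\<lambda>J. g (J \<inter> I))"
    by (subst Bochner_Integration.integral_diff[OF intM intM]) simp
  also have "measure_pmf.expectation M (\<lambda>J. g (J \<inter> I)) = measure_pmf.expectation (map_pmf (\<lambda>J. J \<inter> I) M) g"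
    by simp
  also have "\<dots> = sum g F / real (card F)"
  proof -
    have "finite F" unfolding F_def using fI by auto
    moreover have "F \<noteq> {}"
    proof -
      obtain S where "S \<subseteq> I" "card S = k - d" using obtain_subset_with_card_n[of "k - d" I] cI by auto
      then show ?thesis unfolding F_def by auto
    qed
    ultimately show ?thesis using assms(8) unfolding F_def[symmetric] by (simp add: integral_pmf_of_set)
  qed
  also have "\<dots> = real (k - d) / real k * g I"
    unfolding F_def g_def by (rule avg_sub[OF fI cI assms(1)]) simp
  finally have E: "measure_pmf.expectation M (\<lambda>J. sqnorm p (\<lambda>m. y m - restr J y m))
                   \<le> N - real (k - d) / real k * g I" .
  have h5: "N - g I \<le> \<gamma>0 * N" using assms(5) sqnorm_restr[OF Isub, of y] unfolding N_def g_def by simp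
  have kpos: "real k > 0" using assms(1) by simp
  have t: "0 \<le> 1 - real d / real k" using assms(6) kpos by (simp add: field_simps)
  have kd: "real (k - d) / real k = 1 - real d / real k"
    using assms(6) kpos by (simp add: of_nat_diff diff_divide_distrib)
  have eq: "N - real (k - d) / real k * g I = real d / real k * N + (1 - real d / real k) * (N - g I)"
  proof -
    have gen: "N - (1 - t) * G = t * N + (1 - t) * (N - G)" for t G :: real by algebra
    show ?thesis unfolding kd by (rule gen)
  qed
  have "(1 - real d / real k) * (N - g I) \<le> (1 - real d / real k) * (\<gamma>0 * N)"
    by (rule mult_left_mono[OF h5 t])
  have "N - real (k - d) / real k * g I \<le> (real d / real k + (1 - real d / real k) * \<gamma>0) * N"
  proof -
    have "(real d / real k + (1 - real d / real k) * \<gamma>0) * N = real d / real k * N + (1 - real d / real k) * (\<gamma>0 * N)"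
      by (simp add: algebra_simps)
    then show ?thesis unfolding eq using \<open>(1 - real d / real k) * (N - g I) \<le> (1 - real d / real k) * (\<gamma>0 * N)\<close> by linarith
  qed
  then show ?thesis using E unfolding N_def by linarith
qed

end
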